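(* Let $\gamma>0$, $\gamma\neq1$. Then $N^{\rm alg}_{\mathbb{R}}(r)=c_\gamma\,r/\pi+O(1)$ as $r\to\infty$ for a constant $c_\gamma\le 1+\gamma$, and $c_\gamma=1+\gamma$ if and only if $\gamma$ or $1/\gamma$ is an integer.
   Context: Half-line problem: for $\lambda\neq0$, find $(u,v)$ on $[0,1]$ with $-u''-\lambda^2u=0$, $-v''-\lambda^2\gamma^2v=0$, $u(0)=v(0)=0$, $u(1)=v(1)$, $u'(1)=v'(1)$; $\lambda$ is an ITE if a nontrivial pair exists. ITEs are the nonzero zeros of $F(\lambda)=\gamma\sin\lambda\cos(\gamma\lambda)-\sin(\gamma\lambda)\cos\lambda$; the algebraic multiplicity of an ITE is its order as a zero of $F$. $N^{\rm alg}_{\mathbb{R}}(r)$ is the number of real ITEs in $(0,r]$ counted with algebraic multiplicity. *)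

theory Defs
  imports "HOL-Analysis.Analysis" "HOL-Library.Landau_Symbols"
begin

text \<open>The characteristic function whose nonzero zeros are the ITEs.\<close>
definition ite_F :: "real \<Rightarrow> real \<Rightarrow> real" where
  "ite_F \<gamma> l = \<gamma> * sin l * cos (\<gamma> * l) - sin (\<gamma> * l) * cos l"

definition zero_order :: "(real \<Rightarrow> real) \<Rightarrow> real \<Rightarrow> nat" where
  "zero_order f x = (LEAST n. (deriv ^^ n) f x \<noteq> 0)"

definition N_alg_R :: "real \<Rightarrow> real \<Rightarrow> real" where
  "N_alg_R \<gamma> r =
     real (\<Sum>x\<in>{x. 0 < x \<and> x \<le> r \<and> ite_F \<gamma> x = 0}. zero_order (ite_F \<gamma>) x)"

end

theory Submission
  imports Defs
begin


lemma F_eq: "ite_F g = (\<lambda>l. g * sin l * cos (g*l) - sin (g*l) * cos l)"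
  by (simp add: ite_F_def fun_eq_iff)

lemma F_d1: "((ite_F g) has_real_derivative (1 - g^2) * sin x * sin (g*x)) (at x)"
  unfolding F_eq
  by (rule derivative_eq_intros refl | simp)+ (simp add: power2_eq_square algebra_simps)

definition "F1 g = (\<lambda>x::real. (1 - g^2) * sin x * sin (g*x))"
definition "F2 g = (\<lambda>x::real. (1 - g^2) * (cos x * sin (g*x) + g * sin x * cos (g*x)))"
definition "F3 g = (\<lambda>x::real. (1 - g^2) * (2 * g * cos x * cos (g*x) - (1 + g^2) * sin x * sin (g*x)))"

lemma F_d2: "(F1 g has_real_derivative F2 g x) (at x)"
  unfolding F1_def F2_def
  by (rule derivative_eq_intros refl | simp)+ (simp add: algebra_simps)

lemma F_d3: "(F2 g has_real_derivative F3 g x) (at x)"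
  unfolding F3_def F2_def
  by (rule derivative_eq_intros refl | simp)+ (simp add: power2_eq_square algebra_simps)

lemma d1: "deriv (ite_F g) = F1 g" using F_d1[THEN DERIV_imp_deriv] by (auto simp: fun_eq_iff F1_def)

lemma derivs: "(deriv ^^ 1) (ite_F g) = F1 g" "(deriv ^^ 2) (ite_F g) = F2 g"
   "(deriv ^^ 3) (ite_F g) = F3 g"
proof -
  have 1: "deriv (ite_F g) = F1 g" using F_d1[THEN DERIV_imp_deriv] by (auto simp: fun_eq_iff F1_def)
  have 2: "deriv (F1 g) = F2 g" using F_d2[THEN DERIV_imp_deriv] by (auto simp: fun_eq_iff)
  have 3: "deriv (F2 g) = F3 g" using F_d3[THEN DERIV_imp_deriv] by (auto simp: fun_eq_iff)
  show "(deriv ^^ 1) (ite_F g) = F1 g" using 1 by simp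
  show "(deriv ^^ 2) (ite_F g) = F2 g" using 1 2 by (simp add: numeral_2_eq_2)
  show "(deriv ^^ 3) (ite_F g) = F3 g" using 1 2 3 by (simp add: numeral_3_eq_3)
qed

lemma zero_order_eqI:
  assumes "(deriv ^^ k) f x \<noteq> 0" "\<And>j. j < k \<Longrightarrow> (deriv ^^ j) f x = 0"
  shows "zero_order f x = k"
  unfolding zero_order_def
  by (rule Least_equality) (use assms in \<open>force simp: not_le[symmetric]\<close>)+

lemma one_minus_sq: "g > 0 \<Longrightarrow> g \<noteq> 1 \<Longrightarrow> 1 - g^2 \<noteq> (0::real)"
  by (metis abs_of_pos power2_eq_1_iff real_sqrt_abs real_sqrt_one eq_iff_diff_eq_0 power_one)

lemma order_simple:
  assumes "ite_F g x = 0" "g \<noteq> 1" "g > 0" "sin x \<noteq> 0"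
  shows "zero_order (ite_F g) x = 1"
proof -
  have "sin (g*x) \<noteq> 0"
  proof
    assume s: "sin (g*x) = 0"
    hence "cos (g*x) \<noteq> 0" using sin_cos_squared_add[of "g*x"] by auto
    thus False using assms s by (simp add: ite_F_def)
  qed
  hence "(deriv ^^ 1) (ite_F g) x \<noteq> 0" using assms one_minus_sq[of g] by (simp add: d1 F1_def)
  thus ?thesis by (rule zero_order_eqI) (use assms in auto)
qed

lemma order_triple:
  assumes "ite_F g x = 0" "g \<noteq> 1" "g > 0" "sin x = 0"
  shows "zero_order (ite_F g) x = 3" "sin (g*x) = 0"
proof -
  have c: "cos x \<noteq> 0" using assms sin_cos_squared_add[of x] by auto
  show s: "sin (g*x) = 0" using assms c by (simp add: ite_F_def)
  have c2: "cos (g*x) \<noteq> 0" using s sin_cos_squared_add[of "g*x"] by auto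
  have "(deriv ^^ 3) (ite_F g) x \<noteq> 0" using assms one_minus_sq[of g] c c2 s
    by (simp add: derivs F3_def)
  thus "zero_order (ite_F g) x = 3"
  proof (rule zero_order_eqI)
    fix j :: nat assume "j < 3"
    hence "j = 0 \<or> j = 1 \<or> j = 2" by auto
    thus "(deriv ^^ j) (ite_F g) x = 0" using assms s
      by (auto simp: derivs(2) d1 F1_def F2_def)
  qed
qed



definition "DD g (x::real) = (cos x)^2 + g * (sin x)^2"
definition "gg g (x::real) = (g-1) * sin x * cos x / DD g x"
definition "R2 g (x::real) = (cos x)^2 + g^2 * (sin x)^2"
definition "phi g (x::real) = (1-g)*x + arctan (gg g x)"

lemma DD_pos: "g > 0 \<Longrightarrow> DD g x > 0"
proof -
  assume g: "g > 0"
  have a: "(cos x)^2 \<ge> 0" "(sin x)^2 \<ge> 0" by simp_all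
  show ?thesis
  proof (cases "g \<ge> 1")
    case True
    hence "g*(sin x)^2 \<ge> (sin x)^2" using mult_right_mono[of 1 g "(sin x)^2"] by simp
    thus ?thesis unfolding DD_def using sin_cos_squared_add[of x] by linarith
  next
    case False
    hence "g*(cos x)^2 \<le> (cos x)^2" using mult_right_mono[of g 1 "(cos x)^2"] by simp
    hence "DD g x \<ge> g * ((sin x)^2 + (cos x)^2)" unfolding DD_def by (simp only: distrib_left; linarith)
    thus ?thesis using g by simp
  qed
qed

lemma R2_pos: "g > 0 \<Longrightarrow> R2 g x > 0"
proof -
  assume g: "g > 0"
  have a: "(cos x)^2 \<ge> 0" "(sin x)^2 \<ge> 0" by simp_all
  have g2: "g^2 > 0" using g by simp
  show ?thesis
  proof (cases "g^2 \<ge> 1")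
    case True
    hence "g^2*(sin x)^2 \<ge> (sin x)^2" using mult_right_mono[of 1 "g^2" "(sin x)^2"] by simp
    thus ?thesis unfolding R2_def using sin_cos_squared_add[of x] by linarith
  next
    case False
    hence "g^2*(cos x)^2 \<le> (cos x)^2" using mult_right_mono[of "g^2" 1 "(cos x)^2"] by simp
    hence "R2 g x \<ge> g^2 * ((sin x)^2 + (cos x)^2)" unfolding R2_def by (simp only: distrib_left; linarith)
    thus ?thesis using g2 by simp (use g2 in linarith)
  qed
qed

lemma one_gg: "g > 0 \<Longrightarrow> 1 + (gg g x)^2 = R2 g x / (DD g x)^2"
proof -
  assume g: "g > 0"
  have d: "DD g x \<noteq> 0" using DD_pos[OF g, of x] by linarith
  have p: "\<And>s c::real. (c^2+g * s^2)^2 + ((g-1) * s * c)^2 = (c^2+g^2 * s^2)*(s^2+c^2)" by algebra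
  have "(DD g x)^2 + ((g-1) * sin x * cos x)^2 = R2 g x * ((sin x)^2 + (cos x)^2)"
    unfolding DD_def R2_def by (rule p)
  thus ?thesis using d by (simp add: gg_def field_simps)
qed

lemma F_phase:
  assumes g: "g > 0"
  shows "ite_F g x = sqrt (R2 g x) * sin (phi g x)"
proof -
  define sx where "sx = sin x"
  define cx where "cx = cos x"
  have sc: "sx^2 + cx^2 = 1" by (simp add: sx_def cx_def)
  have dp: "DD g x > 0" using DD_pos[OF g] .
  have rp: "R2 g x > 0" using R2_pos[OF g] .
  have sq: "sqrt (1 + (gg g x)^2) = sqrt (R2 g x) / DD g x"
    using one_gg[OF g, of x] dp by (simp add: real_sqrt_divide)
  have ca: "cos (arctan (gg g x)) = DD g x / sqrt (R2 g x)"
    unfolding cos_arctan sq using dp by simp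
  have sa: "sin (arctan (gg g x)) = (g-1) * sx * cx / sqrt (R2 g x)"
    unfolding sin_arctan sq using dp by (simp add: gg_def sx_def cx_def)
  have e1: "sin (x + arctan (gg g x)) = g * sx / sqrt (R2 g x)"
  proof -
    have "sin (x + arctan (gg g x)) = (sx * DD g x + cx * ((g-1) * sx * cx)) / sqrt (R2 g x)"
      by (simp add: sin_add ca sa sx_def cx_def add_divide_distrib)
    also have "sx * DD g x + cx * ((g-1) * sx * cx) = g * sx * (sx^2+cx^2)"
      by (simp only: DD_def flip: sx_def cx_def) (simp add: power2_eq_square algebra_simps)
    finally show ?thesis using sc by simp
  qed
  have e2: "cos (x + arctan (gg g x)) = cx / sqrt (R2 g x)"
  proof -
    have "cos (x + arctan (gg g x)) = (cx * DD g x - sx * ((g-1) * sx * cx)) / sqrt (R2 g x)"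
      by (simp add: cos_add ca sa sx_def cx_def diff_divide_distrib)
    also have "cx * DD g x - sx * ((g-1) * sx * cx) = cx * (sx^2+cx^2)"
      by (simp only: DD_def flip: sx_def cx_def) (simp add: power2_eq_square algebra_simps)
    finally show ?thesis using sc by simp
  qed
  have "phi g x = (x + arctan (gg g x)) - g*x" by (simp add: phi_def algebra_simps)
  hence "sin (phi g x) = (g* sx*cos (g*x) - cx * sin (g*x)) / sqrt (R2 g x)"
    by (simp add: sin_diff e1 e2 diff_divide_distrib)
  thus ?thesis using rp by (simp add: ite_F_def sx_def cx_def)
qed



lemma gg_deriv:
  assumes g: "g > 0"
  shows "(gg g has_real_derivative
     (g-1) * (((cos x)^2 - (sin x)^2) * DD g x - sin x * cos x * (2*(g-1)* sin x * cos x)) / (DD g x)^2) (at x)"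
proof -
  have d: "DD g x \<noteq> 0" using DD_pos[OF g, of x] by linarith
  have e: "DD g = (\<lambda>x. (cos x)^2 + g * (sin x)^2)" by (simp add: fun_eq_iff DD_def)
  have dd: "(DD g has_real_derivative 2*(g-1)* sin x * cos x) (at x)"
    unfolding e by (rule derivative_eq_intros refl | simp)+ (simp add: algebra_simps)
  have n: "((\<lambda>x. (g-1) * sin x * cos x) has_real_derivative (g-1)*((cos x)^2 - (sin x)^2)) (at x)"
    by (rule derivative_eq_intros refl | simp)+ (simp add: algebra_simps power2_eq_square)
  have "gg g = (\<lambda>x. (g-1) * sin x * cos x / DD g x)" by (simp add: fun_eq_iff gg_def)
  then show ?thesis using DERIV_divide[OF n dd d]
    by (simp add: power2_eq_square algebra_simps)
qed

lemma phi_deriv: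
  assumes g: "g > 0"
  shows "(phi g has_real_derivative (1-g)*(1+g)*g*(sin x)^2 / R2 g x) (at x)"
proof -
  have d: "DD g x > 0" using DD_pos[OF g, of x] .
  have r: "R2 g x > 0" using R2_pos[OF g, of x] .
  have e: "phi g = (\<lambda>x. (1-g)*x + arctan (gg g x))" by (simp add: fun_eq_iff phi_def)
  have a: "((\<lambda>x. arctan (gg g x)) has_real_derivative inverse (1 + (gg g x)^2) *
     ((g-1) * (((cos x)^2 - (sin x)^2) * DD g x - sin x * cos x * (2*(g-1)* sin x * cos x)) / (DD g x)^2)) (at x)"
    by (rule DERIV_chain2[OF DERIV_arctan gg_deriv[OF g]])
  have b: "((\<lambda>x. (1-g)*x) has_real_derivative (1-g)) (at x)"
    by (rule derivative_eq_intros refl | simp)+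
  have "(phi g has_real_derivative (1-g) + inverse (1 + (gg g x)^2) *
     ((g-1) * (((cos x)^2 - (sin x)^2) * DD g x - sin x * cos x * (2*(g-1)* sin x * cos x)) / (DD g x)^2)) (at x)"
    unfolding e by (rule DERIV_add[OF b a])
  also have "(1-g) + inverse (1 + (gg g x)^2) *
     ((g-1) * (((cos x)^2 - (sin x)^2) * DD g x - sin x * cos x * (2*(g-1)* sin x * cos x)) / (DD g x)^2)
     = ((1-g) * R2 g x + (g-1) * (((cos x)^2 - (sin x)^2) * DD g x - sin x * cos x * (2*(g-1)* sin x * cos x))) / R2 g x"
    using d r by (simp add: one_gg[OF g] field_simps)
  also have "(1-g) * R2 g x + (g-1) * (((cos x)^2 - (sin x)^2) * DD g x - sin x * cos x * (2*(g-1)* sin x * cos x))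
     = (1-g)*(1+g)*g*(sin x)^2 * ((sin x)^2 + (cos x)^2)"
  proof -
    have p: "\<And>s c::real. (1-g) * ((c^2 + g^2 * s^2)*(s^2+c^2)) + (g-1) * ((c^2 - s^2) * (c^2 + g * s^2) - s * c * (2*(g-1) * s * c))
      = (1-g)*(1+g)*g * s^2 * (s^2 + c^2)" by algebra
    have q: "R2 g x = ((cos x)^2 + g^2 * (sin x)^2)*((sin x)^2+(cos x)^2)" by (simp add: R2_def)
    show ?thesis unfolding q DD_def by (rule p)
  qed
  finally show ?thesis by simp
qed



lemma count_zeros:
  fixes h :: "real \<Rightarrow> real"
  assumes mono: "\<And>a b. a < b \<Longrightarrow> h a < h b" and cont: "continuous_on UNIV h"
    and h0: "h 0 = 0" and r: "r \<ge> 0"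
  shows "finite {x. 0<x \<and> x \<le> r \<and> sin (h x) = 0} \<and>
         card {x. 0<x \<and> x \<le> r \<and> sin (h x) = 0} = nat \<lfloor>h r / pi\<rfloor>"
proof -
  let ?Z = "{x. 0<x \<and> x \<le> r \<and> sin (h x) = 0}"
  let ?T = "{1..\<lfloor>h r / pi\<rfloor>}"
  define f where "f x = \<lfloor>h x / pi\<rfloor>" for x
  have fz: "h x = of_int (f x) * pi" if s0: "sin (h x) = 0" for x
  proof -
    obtain i :: int where i: "h x = of_int i * pi" using s0 unfolding sin_zero_iff_int2 by blast
    hence "f x = i" unfolding f_def by simp
    thus ?thesis using i by (simp only:)
  qed
  have hmono: "h a \<le> h b" if "a \<le> b" for a b
    using mono[of a b] that by (cases "a = b") auto
  have "bij_betw f ?Z ?T"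
  proof (rule bij_betwI')
    fix x y assume x: "x \<in> ?Z" and y: "y \<in> ?Z"
    show "(f x = f y) = (x = y)"
    proof
      assume "f x = f y"
      hence "h x = h y" using fz[of x] fz[of y] x y by simp
      thus "x = y" using mono[of x y] mono[of y x] by (metis less_irrefl linorder_neqE_linordered_idom)
    qed simp
  next
    fix x assume x: "x \<in> ?Z"
    have "h x > 0" using mono[of 0 x] x h0 by auto
    hence "f x \<ge> 1" using fz[of x] x by (simp add: zero_less_mult_iff)
    moreover have "f x \<le> \<lfloor>h r / pi\<rfloor>" unfolding f_def
      using hmono[of x r] x by (intro floor_mono divide_right_mono) auto
    ultimately show "f x \<in> ?T" by simp
  next
    fix m assume m: "m \<in> ?T"
    hence m1: "m \<ge> 1" and m2: "m \<le> \<lfloor>h r / pi\<rfloor>" by auto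
    have "of_int m \<le> h r / pi" using m2 le_floor_iff by blast
    hence le: "of_int m * pi \<le> h r" using pi_gt_zero by (simp add: field_simps)
    have ge: "h 0 \<le> of_int m * pi" using h0 m1 by simp
    obtain x where x: "0 \<le> x" "x \<le> r" "h x = of_int m * pi"
      using IVT'[OF ge le r] continuous_on_subset[OF cont] by blast
    have "x \<noteq> 0" using x h0 m1 by auto
    hence "x \<in> ?Z" using x by (simp add: sin_zero_iff_int2)
    moreover have "m = f x" using x by (simp add: f_def)
    ultimately show "\<exists>x\<in>?Z. m = f x" by blast
  qed
  hence "finite ?Z" "card ?Z = card ?T" using bij_betw_finite bij_betw_same_card by blast+
  thus ?thesis by simp
qed



definition "chi g x = (if g < 1 then phi g x else - phi g x)"

lemma chi_deriv:
  assumes g: "g > 0"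
  shows "(chi g has_real_derivative \<bar>1-g\<bar>*(1+g)*g*(sin x)^2 / R2 g x) (at x)"
proof (cases "g < 1")
  case True
  hence "chi g = phi g" by (simp add: fun_eq_iff chi_def)
  thus ?thesis using phi_deriv[OF g, of x] True by simp
next
  case False
  hence e: "chi g = (\<lambda>x. - phi g x)" by (simp add: fun_eq_iff chi_def)
  have "((\<lambda>x. - phi g x) has_real_derivative - ((1-g)*(1+g)*g*(sin x)^2 / R2 g x)) (at x)"
    by (rule DERIV_minus[OF phi_deriv[OF g]])
  moreover have ab: "\<bar>1-g\<bar> = -(1-g)" using False by simp
  moreover have "- ((1-g)*(1+g)*g*(sin x)^2 / R2 g x) = \<bar>1-g\<bar>*(1+g)*g*(sin x)^2 / R2 g x"
    unfolding ab by (simp only: mult_minus_left minus_divide_left)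
  ultimately show ?thesis unfolding e by simp
qed

lemma chi_cont: "g > 0 \<Longrightarrow> continuous_on S (chi g)"
  by (rule continuous_at_imp_continuous_on) (use DERIV_isCont[OF chi_deriv] in blast)

lemma chi_0: "chi g 0 = 0"
  by (simp add: chi_def phi_def gg_def)

lemma chi_zero_iff: "g > 0 \<Longrightarrow> sin (chi g x) = 0 \<longleftrightarrow> ite_F g x = 0"
proof -
  assume g: "g > 0"
  have "sqrt (R2 g x) > 0" using R2_pos[OF g, of x] by simp
  moreover have "sin (chi g x) = 0 \<longleftrightarrow> sin (phi g x) = 0" by (simp add: chi_def)
  ultimately show ?thesis using F_phase[OF g, of x] by simp
qed

lemma chi_bound: "\<bar>chi g x - \<bar>1-g\<bar> * x\<bar> < pi/2"
proof -
  have b: "\<bar>arctan (gg g x)\<bar> < pi/2" using arctan_bounded[of "gg g x"] by (simp only: abs_less_iff) simp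
  show ?thesis
  proof (cases "g < 1")
    case True
    hence "chi g x - \<bar>1-g\<bar> * x = arctan (gg g x)" by (simp add: chi_def phi_def)
    thus ?thesis using b by simp
  next
    case False
    hence "chi g x - \<bar>1-g\<bar> * x = - arctan (gg g x)" by (simp add: chi_def phi_def algebra_simps)
    thus ?thesis using b by simp
  qed
qed

lemma chi_mono:
  assumes g: "g > 0" "g \<noteq> 1" and ab: "a < b"
  shows "chi g a < chi g b"
proof -
  define k :: int where "k = \<lfloor>a/pi\<rfloor> + 1"
  have ka: "a < k * pi" using floor_correct[of "a/pi"] pi_gt_zero unfolding k_def
    by (simp add: field_simps)
  have "of_int \<lfloor>a/pi\<rfloor> * pi \<le> a/pi*pi" by (rule mult_right_mono[OF of_int_floor_le]) simp
  hence ka2: "(k-1) * pi \<le> a" unfolding k_def by simp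
  define v where "v = min b (k*pi)"
  have av: "a < v" using ab ka by (simp add: v_def)
  have vb: "v \<le> b" by (simp add: v_def)
  have pos: "\<bar>1-g\<bar>*(1+g)*g > 0" using g by simp
  have "chi g a < chi g v"
  proof (rule DERIV_pos_imp_increasing_open[OF av])
    fix x assume x: "a < x" "x < v"
    have "sin x \<noteq> 0"
    proof
      assume "sin x = 0"
      then obtain i :: int where i: "x = i * pi" using sin_zero_iff_int2 by blast
      have l1: "real_of_int (k-1) * pi < real_of_int i * pi" using x ka2 i by (simp only: of_int_diff of_int_1; linarith)
      have l2: "real_of_int i * pi < real_of_int k * pi" using x i v_def by simp
      have "real_of_int (k-1) < real_of_int i" using l1 pi_gt_zero by (simp only: mult_less_cancel_right_pos)
      moreover have "real_of_int i < real_of_int k" using l2 pi_gt_zero by (simp only: mult_less_cancel_right_pos)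
      ultimately have "k - 1 < i" "i < k" by (simp only: of_int_less_iff)+
      thus False by simp
    qed
    hence "\<bar>1-g\<bar>*(1+g)*g*(sin x)^2 / R2 g x > 0" using pos R2_pos[OF g(1), of x] by simp
    thus "\<exists>y. DERIV (chi g) x :> y \<and> 0 < y" using chi_deriv[OF g(1), of x] by blast
  qed (rule chi_cont[OF g(1)])
  also have "chi g v \<le> chi g b"
  proof (rule DERIV_nonneg_imp_increasing_open[OF vb])
    fix x assume x: "v < x" "x < b"
    have "\<bar>1-g\<bar>*(1+g)*g*(sin x)^2 / R2 g x \<ge> 0" using pos R2_pos[OF g(1), of x] by simp
    thus "\<exists>y. DERIV (chi g) x :> y \<and> 0 \<le> y" using chi_deriv[OF g(1), of x] by blast
  qed (rule chi_cont[OF g(1)])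
  finally show ?thesis .
qed



lemma Z_eq: "g > 0 \<Longrightarrow> {x. 0 < x \<and> x \<le> r \<and> ite_F g x = 0} = {x. 0 < x \<and> x \<le> r \<and> sin (chi g x) = 0}"
  using chi_zero_iff[of g] by simp

lemma Z_count:
  assumes g: "g > 0" "g \<noteq> 1" and r: "r \<ge> 0"
  shows "finite {x. 0 < x \<and> x \<le> r \<and> ite_F g x = 0} \<and>
         card {x. 0 < x \<and> x \<le> r \<and> ite_F g x = 0} = nat \<lfloor>chi g r / pi\<rfloor>"
  unfolding Z_eq[OF g(1)]
  by (rule count_zeros[OF chi_mono[OF g] chi_cont[OF g(1)] chi_0 r])

lemma N_split:
  assumes g: "g > 0" "g \<noteq> 1" and fin: "finite {x. 0 < x \<and> x \<le> r \<and> ite_F g x = 0}"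
  shows "N_alg_R g r = card {x. 0 < x \<and> x \<le> r \<and> ite_F g x = 0}
     + 2 * card {x. 0 < x \<and> x \<le> r \<and> sin x = 0 \<and> sin (g*x) = 0}"
proof -
  let ?Z = "{x. 0 < x \<and> x \<le> r \<and> ite_F g x = 0}"
  let ?P = "{x. sin x = 0}"
  have z3: "?Z \<inter> ?P = {x. 0 < x \<and> x \<le> r \<and> sin x = 0 \<and> sin (g*x) = 0}"
  proof (intro set_eqI iffI)
    fix x assume "x \<in> ?Z \<inter> ?P"
    thus "x \<in> {x. 0 < x \<and> x \<le> r \<and> sin x = 0 \<and> sin (g*x) = 0}"
      using order_triple(2)[OF _ g(2) g(1), of x] by simp
  next
    fix x assume "x \<in> {x. 0 < x \<and> x \<le> r \<and> sin x = 0 \<and> sin (g*x) = 0}"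
    thus "x \<in> ?Z \<inter> ?P" by (simp add: ite_F_def)
  qed
  have "(\<Sum>x\<in>?Z. zero_order (ite_F g) x) = (\<Sum>x\<in>?Z. if sin x = 0 then 3 else 1)"
  proof (rule sum.cong[OF refl])
    fix x assume x: "x \<in> ?Z"
    show "zero_order (ite_F g) x = (if sin x = 0 then 3 else 1)"
    proof (cases "sin x = 0")
      case True thus ?thesis using order_triple(1)[OF _ g(2) g(1), of x] x by simp
    next
      case False thus ?thesis using order_simple[OF _ g(2) g(1), of x] x by simp
    qed
  qed
  also have "\<dots> = 3 * card (?Z \<inter> ?P) + card (?Z \<inter> - ?P)"
    by (subst sum.If_cases[OF fin]) simp
  also have "card ?Z = card (?Z \<inter> ?P) + card (?Z \<inter> - ?P)"
    using card_Int_Diff[OF fin, of ?P] by (simp only: Diff_eq)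
  ultimately show ?thesis unfolding N_alg_R_def z3[symmetric] by simp
qed



definition "Kset g = {k::nat. 0 < k \<and> g * real k \<in> \<int>}"

lemma Z3_char:
  assumes "0 < x" "sin x = 0" "sin (g*x) = 0"
  shows "\<exists>k\<in>Kset g. x = real k * pi"
proof -
  obtain i :: int where i: "x = of_int i * pi" using assms(2) sin_zero_iff_int2 by blast
  obtain j :: int where j: "g*x = of_int j * pi" using assms(3) sin_zero_iff_int2 by blast
  have ip: "i > 0" using assms(1) i pi_gt_zero by (simp add: zero_less_mult_iff)
  define k where "k = nat i"
  have ik: "real k = of_int i" using ip by (simp add: k_def)
  have "g * real k = of_int j" using i j ik pi_gt_zero by (simp add: mult.assoc[symmetric])
  hence "k \<in> Kset g" using ip by (simp add: Kset_def k_def)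
  moreover have "x = real k * pi" using i ik by simp
  ultimately show ?thesis by blast
qed

lemma Kset_dvd:
  assumes q: "q = (LEAST k. k \<in> Kset g)" and k: "k \<in> Kset g"
  shows "q dvd k"
proof -
  have qK: "q \<in> Kset g" using q k by (metis LeastI)
  have qp: "q > 0" using qK by (simp add: Kset_def)
  obtain a where a: "g * real q = of_int a" using qK by (auto simp: Kset_def elim!: Ints_cases)
  obtain b where b: "g * real k = of_int b" using k by (auto simp: Kset_def elim!: Ints_cases)
  have e: "real k = real (k mod q) + real q * real (k div q)"
    by (metis mod_mult_div_eq of_nat_add of_nat_mult)
  have "g * real (k mod q) = g * real k - (g * real q) * real (k div q)"
    unfolding e by (simp add: algebra_simps)
  also have "\<dots> = of_int (b - int (k div q) * a)" using a b by simp
  finally have "g * real (k mod q) = of_int (b - int (k div q) * a)" .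
  hence "g * real (k mod q) \<in> \<int>" by simp
  moreover have "k mod q < q" using qp by simp
  ultimately have "\<not> (0 < k mod q)" using not_less_Least[of "k mod q" "\<lambda>k. k \<in> Kset g"] q
    by (auto simp: Kset_def)
  thus ?thesis by (simp add: mod_eq_0_iff_dvd)
qed

lemma Z3_empty:
  assumes "Kset g = {}"
  shows "{x. 0 < x \<and> x \<le> r \<and> sin x = 0 \<and> sin (g*x) = 0} = {}"
  using Z3_char[of _ g] assms by blast

lemma Z3_card:
  assumes ne: "Kset g \<noteq> {}" and q: "q = (LEAST k. k \<in> Kset g)" and r: "r \<ge> 0"
  shows "card {x. 0 < x \<and> x \<le> r \<and> sin x = 0 \<and> sin (g*x) = 0} = nat \<lfloor>r / (real q * pi)\<rfloor>"
proof -
  have qK: "q \<in> Kset g" using q ne by (metis LeastI ex_in_conv)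
  have qp: "q > 0" using qK by (simp add: Kset_def)
  obtain a where a: "g * real q = of_int a" using qK by (auto simp: Kset_def elim!: Ints_cases)
  define m where "m = nat \<lfloor>r / (real q * pi)\<rfloor>"
  define f where "f j = real j * real q * pi" for j :: nat
  have qpi: "real q * pi > 0" using qp by simp
  have "{x. 0 < x \<and> x \<le> r \<and> sin x = 0 \<and> sin (g*x) = 0} = f ` {1..m}"
  proof (intro set_eqI iffI)
    fix x assume "x \<in> {x. 0 < x \<and> x \<le> r \<and> sin x = 0 \<and> sin (g*x) = 0}"
    hence x: "0 < x" "x \<le> r" "sin x = 0" "sin (g*x) = 0" by auto
    obtain k where k: "k \<in> Kset g" "x = real k * pi" using Z3_char[OF x(1,3,4)] by blast
    obtain j where j: "k = q * j" using Kset_dvd[OF q k(1)] by (auto elim: dvdE)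
    have xf: "x = f j" using k j by (simp add: f_def)
    have "j \<ge> 1" using k j by (auto simp: Kset_def)
    moreover have "real j \<le> r / (real q * pi)" using x(2) xf qpi by (simp add: f_def field_simps)
    hence "j \<le> m" unfolding m_def by (simp add: le_nat_floor)
    ultimately show "x \<in> f ` {1..m}" using xf by auto
  next
    fix x assume "x \<in> f ` {1..m}"
    then obtain j where j: "1 \<le> j" "j \<le> m" "x = f j" by auto
    have "real j \<le> r / (real q * pi)"
    proof -
      have "real j \<le> real m" using j by simp
      also have "real m \<le> r / (real q * pi)" unfolding m_def using r qpi
        by (simp add: of_nat_floor)
      finally show ?thesis .
    qed
    hence "x \<le> r" using j qpi by (simp add: f_def field_simps)
    moreover have "0 < x" using j qp by (simp add: f_def)
    moreover have "sin x = 0" using j by (simp add: f_def sin_zero_iff_int2)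
        (metis of_int_of_nat_eq of_nat_mult)
    moreover have "sin (g*x) = 0"
    proof -
      have "g * x = of_int (int j * a) * pi" using j a by (simp add: f_def algebra_simps)
      thus ?thesis by (simp only: sin_zero_iff_int2) blast
    qed
    ultimately show "x \<in> {x. 0 < x \<and> x \<le> r \<and> sin x = 0 \<and> sin (g*x) = 0}" by simp
  qed
  moreover have "inj_on f {1..m}" using qpi by (auto simp: inj_on_def f_def)
  ultimately show ?thesis by (simp add: card_image m_def)
qed



definition "cc g = \<bar>1-g\<bar> + (if Kset g = {} then 0 else 2 / real (LEAST k. k \<in> Kset g))"

lemma Ints_gt0_ge1: "(x::real) \<in> \<int> \<Longrightarrow> x > 0 \<Longrightarrow> x \<ge> 1"
  by (elim Ints_cases) simp

lemma inv_int_Kset: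
  assumes g: "g > 0" and n: "1/g \<in> \<int>"
  shows "nat \<lfloor>1/g\<rfloor> \<in> Kset g" "real (nat \<lfloor>1/g\<rfloor>) = 1/g"
proof -
  obtain n where n: "1/g = of_int n" using n by (elim Ints_cases)
  have np: "n > 0" using g n by (metis of_int_0_less_iff zero_less_divide_1_iff)
  show e: "real (nat \<lfloor>1/g\<rfloor>) = 1/g" using n np by simp
  have "g * real (nat \<lfloor>1/g\<rfloor>) = 1" unfolding e using g by simp
  thus "nat \<lfloor>1/g\<rfloor> \<in> Kset g" using np n by (simp add: Kset_def)
qed

lemma cc_prop:
  assumes g: "g > 0" "g \<noteq> 1"
  shows "cc g \<le> 1 + g \<and> (cc g = 1 + g \<longleftrightarrow> (g \<in> \<int> \<or> 1/g \<in> \<int>))"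
proof (cases "Kset g = {}")
  case True
  have "g \<notin> \<int>"
  proof
    assume "g \<in> \<int>" hence "1 \<in> Kset g" by (simp add: Kset_def)
    thus False using True by simp
  qed
  moreover have "1/g \<notin> \<int>" using inv_int_Kset[OF g(1)] True by auto
  moreover have "\<bar>1-g\<bar> < 1 + g" using g by simp
  ultimately show ?thesis using True by (simp add: cc_def)
next
  case False
  define q where "q = (LEAST k. k \<in> Kset g)"
  have qK: "q \<in> Kset g" using False unfolding q_def by (metis LeastI ex_in_conv)
  have qp: "q > 0" using qK by (simp add: Kset_def)
  obtain a where a: "g * real q = of_int a" using qK by (auto simp: Kset_def elim!: Ints_cases)
  have ap: "a \<ge> 1" using a g qp by (metis Ints_gt0_ge1 Ints_of_int mult_pos_pos of_int_le_iff of_int_1 of_nat_0_less_iff)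
  have ccq: "cc g = \<bar>1-g\<bar> + 2 / real q" using False by (simp add: cc_def q_def)
  have q1: "real q \<ge> 1" using qp by simp
  show ?thesis
  proof (cases "g > 1")
    case True
    have ni: "1/g \<notin> \<int>"
    proof
      assume "1/g \<in> \<int>"
      moreover have "1/g > 0" "1/g < 1" using True by auto
      ultimately show False using Ints_gt0_ge1 by fastforce
    qed
    have c: "cc g = g - 1 + 2 / real q" using ccq True by simp
    have le: "2 / real q \<le> 2" using q1 by (simp add: divide_le_eq)
    have "cc g = 1 + g \<longleftrightarrow> q = 1"
    proof
      assume "cc g = 1 + g"
      hence "2 / real q = 2" using c by simp
      thus "q = 1" using q1 by (simp add: divide_eq_eq)
    qed (simp add: c)
    also have "q = 1 \<longleftrightarrow> g \<in> \<int>"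
    proof
      assume "q = 1" thus "g \<in> \<int>" using a by (metis Ints_of_int mult.right_neutral of_nat_1)
    next
      assume "g \<in> \<int>" hence "1 \<in> Kset g" by (simp add: Kset_def)
      hence "q \<le> 1" unfolding q_def by (rule Least_le)
      thus "q = 1" using qp by simp
    qed
    finally show ?thesis using c le ni by simp
  next
    case False
    hence gl: "g < 1" using g by simp
    have ni: "g \<notin> \<int>" using Ints_gt0_ge1 g gl by fastforce
    have c: "cc g = 1 - g + 2 / real q" using ccq gl by simp
    have gq: "g = of_int a / real q" using a qp by (simp add: field_simps)
    have le: "2 / real q \<le> 2 * g" using ap qp unfolding gq by (simp add: divide_right_mono)
    have "cc g = 1 + g \<longleftrightarrow> a = 1"
    proof
      assume "cc g = 1 + g"
      hence "2 / real q = 2 * g" using c by simp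
      hence "2 / real q = 2 * of_int a / real q" unfolding gq by simp
      hence "of_int a = (1::real)" using qp by (simp add: field_simps)
      thus "a = 1" by simp
    next
      assume "a = 1"
      hence "2 / real q = 2 * g" using gq by simp
      thus "cc g = 1 + g" using c by linarith
    qed
    also have "a = 1 \<longleftrightarrow> 1/g \<in> \<int>"
    proof
      assume "a = 1" hence "1/g = real q" using gq qp by simp
      thus "1/g \<in> \<int>" by simp
    next
      assume "1/g \<in> \<int>"
      hence "q \<le> nat \<lfloor>1/g\<rfloor>" unfolding q_def using inv_int_Kset[OF g(1)] by (simp add: Least_le)
      hence "real q \<le> 1/g" using inv_int_Kset[OF g(1) \<open>1/g \<in> \<int>\<close>] by (metis of_nat_le_iff)
      hence "g * real q \<le> 1" using g by (simp add: field_simps)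
      hence "a \<le> 1" using a by simp
      thus "a = 1" using ap by simp
    qed
    finally show ?thesis using c le ni by simp
  qed
qed



lemma N_bound:
  assumes g: "g > 0" "g \<noteq> 1" and r: "r \<ge> 0"
  shows "\<bar>N_alg_R g r - cc g * r / pi\<bar> \<le> 4"
proof -
  have ZC: "finite {x. 0 < x \<and> x \<le> r \<and> ite_F g x = 0}"
     "card {x. 0 < x \<and> x \<le> r \<and> ite_F g x = 0} = nat \<lfloor>chi g r / pi\<rfloor>"
    using Z_count[OF g r] by auto
  have N: "N_alg_R g r = real (nat \<lfloor>chi g r / pi\<rfloor>)
     + 2 * real (card {x. 0 < x \<and> x \<le> r \<and> sin x = 0 \<and> sin (g*x) = 0})"
    using N_split[OF g ZC(1)] ZC(2) by simp
  have c0: "chi g r \<ge> 0"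
  proof (cases "r = 0")
    case True thus ?thesis by (simp add: chi_0)
  next
    case False thus ?thesis using chi_mono[OF g, of 0 r] r chi_0[of g] by simp
  qed
  define A where "A = chi g r / pi"
  have A0: "A \<ge> 0" using c0 by (simp add: A_def)
  have fA: "real (nat \<lfloor>A\<rfloor>) = of_int \<lfloor>A\<rfloor>" using A0 by simp
  have fA1: "A - 1 < of_int \<lfloor>A\<rfloor>" "of_int \<lfloor>A\<rfloor> \<le> A" by simp_all
  have "\<bar>chi g r - \<bar>1-g\<bar> * r\<bar> < pi/2" by (rule chi_bound)
  hence "\<bar>chi g r - \<bar>1-g\<bar> * r\<bar> / pi < 1/2" by (simp add: divide_less_eq)
  moreover have "A - \<bar>1-g\<bar> * r / pi = (chi g r - \<bar>1-g\<bar> * r) / pi"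
    unfolding A_def by (simp add: diff_divide_distrib)
  ultimately have Ab: "\<bar>A - \<bar>1-g\<bar> * r / pi\<bar> < 1/2"
    by (simp only: abs_divide abs_of_pos[OF pi_gt_zero])
  show ?thesis
  proof (cases "Kset g = {}")
    case True
    have X: "N_alg_R g r = of_int \<lfloor>A\<rfloor>" using N Z3_empty[OF True] fA by (simp add: A_def)
    have Y: "cc g * r / pi = \<bar>1-g\<bar> * r / pi" using True by (simp add: cc_def)
    show ?thesis unfolding X Y abs_le_iff using fA1 Ab[unfolded abs_less_iff] by linarith
  next
    case False
    define q where "q = (LEAST k. k \<in> Kset g)"
    have qK: "q \<in> Kset g" using False unfolding q_def by (metis LeastI ex_in_conv)
    have qp: "real q > 0" using qK by (simp add: Kset_def)
    define B where "B = r / (real q * pi)"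
    have B0: "B \<ge> 0" using r qp by (simp add: B_def)
    have fB: "real (nat \<lfloor>B\<rfloor>) = of_int \<lfloor>B\<rfloor>" using B0 by simp
    have fB1: "B - 1 < of_int \<lfloor>B\<rfloor>" "of_int \<lfloor>B\<rfloor> \<le> B" by simp_all
    have X: "N_alg_R g r = of_int \<lfloor>A\<rfloor> + 2 * of_int \<lfloor>B\<rfloor>"
      using N Z3_card[OF False q_def r] fA fB by (simp add: A_def B_def)
    have Y: "cc g * r / pi = \<bar>1-g\<bar> * r / pi + 2 * B"
      using False qp by (simp add: cc_def q_def[symmetric] B_def field_simps)
    show ?thesis unfolding X Y abs_le_iff using fA1 fB1 Ab[unfolded abs_less_iff] by linarith
  qed
qed

theorem mainTheorem7:
  fixes \<gamma> :: real
  assumes "\<gamma> > 0" and "\<gamma> \<noteq> 1"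
  shows "\<exists>c::real. c \<le> 1 + \<gamma> \<and>
           (\<lambda>r. N_alg_R \<gamma> r - c * r / pi) \<in> O[at_top](\<lambda>_. 1) \<and>
           (c = 1 + \<gamma> \<longleftrightarrow> (\<gamma> \<in> \<int> \<or> 1 / \<gamma> \<in> \<int>))"
proof (intro exI conjI)
  show "cc \<gamma> \<le> 1 + \<gamma>" using cc_prop[OF assms] by blast
  show "cc \<gamma> = 1 + \<gamma> \<longleftrightarrow> (\<gamma> \<in> \<int> \<or> 1 / \<gamma> \<in> \<int>)" using cc_prop[OF assms] by blast
  have "eventually (\<lambda>r. norm (N_alg_R \<gamma> r - cc \<gamma> * r / pi) \<le> 4 * norm (1::real)) at_top"
    using eventually_ge_at_top[of 0] by eventually_elim (use N_bound[OF assms] in simp)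
  thus "(\<lambda>r. N_alg_R \<gamma> r - cc \<gamma> * r / pi) \<in> O[at_top](\<lambda>_. 1)" by (rule bigoI)
qed


end
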